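(* Assume $f$ satisfies conditions (A0)–(A3) below. Then there exists a constant $C>0$ such that for every $\lambda\in[0,1]$ and every $x\in\mathscr E$, if $\mathscr F_\lambda(x)=0$ then $\|x\|<C$.
   Context: Let $n,m\ge1$, $\mathbf V=\mathbb R^n$ with Euclidean inner product $x\bullet z$ and norm $|x|$; for $\mathbf y=(y^1,\dots,y^m)\in\mathbf V^m$ put $|\mathbf y|:=\max_j|y^j|$. Fix reals $0=\tau_0<\tau_1<\dots<\tau_m<2\pi$ with $\tau_{m-j+1}=2\pi-\tau_j$. Let $f:\mathbb R\times\mathbf V\times\mathbf V^m\times\mathbf V\to\mathbf V$ and for $u:\mathbb R\to\mathbf V$ put $\mathbf u_t:=(u(t-\tau_1),\dots,u(t-\tau_m))$. Let $\mathscr E:=C^2_{2\pi}(\mathbb R;\mathbf V)$ be the space of $2\pi$-periodic $C^2$ maps with norm $\|u\|:=\max\{\|u\|_\infty,\|\dot u\|_\infty,\|\ddot u\|_\infty\}$, $\mathscr C:=C_{2\pi}(\mathbb R;\mathbf V)$, $\widetilde{\mathscr C}:=C_{2\pi}(\mathbb R;\mathbf V\times\mathbf V^m\times\mathbf V)$ (sup norms). Define $L:\mathscr E\to\mathscr C$, $Lu:=\ddot u-u$ (an isomorphism); $J:\mathscr E\to\widetilde{\mathscr C}$, $(Ju)(t):=(u(t),\mathbf u_t,\dot u(t))$; $N:\widetilde{\mathscr C}\to\mathscr C$, $N(x,\mathbf y,z)(t):=f(t,x(t),\mathbf y(t),z(t))-x(t)$; and $\mathscr F_\lambda(x):=x-\lambda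 L^{-1}N(Jx)$ for $\lambda\in[0,1]$. (Thus $\mathscr F_\lambda(x)=0$ iff $x$ is a $2\pi$-periodic solution of $\ddot x=\lambda f(t,x,\mathbf x_t,\dot x)+(1-\lambda)x$.) Conditions: (A0) $f$ continuous and $2\pi$-periodic in $t$. (A1) There is $R>0$ such that: $|x|\ge R$, $|\mathbf y|\le|x|$, $x\bullet z=0$ imply $x\bullet f(t,x,\mathbf y,z)>0$. (A2) There is a continuous $\phi:[0,\infty)\to(0,\infty)$ with $\int_0^\infty\frac{s\,ds}{\phi(s)}=\infty$ and $|f(t,x,\mathbf y,z)|\le\phi(|z|)$ whenever $|x|,|\mathbf y|\le R$. (A3) There are $\alpha,K>0$ with $|f(t,x,\mathbf y,z)|\le\alpha(x\bullet f(t,x,\mathbf y,z)+|z|^2)+K$ whenever $|x|,|\mathbf y|\le R$. *)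

theory Defs
  imports "HOL-Analysis.Analysis"
begin

text \<open>The space V = R^n is an arbitrary Euclidean space 'a.
  Elements of V^m are represented as functions nat \<Rightarrow> 'a which vanish
  outside the index set {1..m}; the delays are tau 1, ..., tau m.\<close>

definition tuples :: "nat \<Rightarrow> (nat \<Rightarrow> 'a::real_normed_vector) set" where
  "tuples m = {y. \<forall>j. j \<notin> {1..m} \<longrightarrow> y j = 0}"

definition tnorm :: "nat \<Rightarrow> (nat \<Rightarrow> 'a::real_normed_vector) \<Rightarrow> real" where
  "tnorm m y = Max ((\<lambda>j. norm (y j)) ` {1..m})"

definition dot :: "(real \<Rightarrow> 'a::real_normed_vector) \<Rightarrow> real \<Rightarrow> 'a" where
  "dot u t = vector_derivative u (at t)"

definition ddot :: "(real \<Rightarrow> 'a::real_normed_vector) \<Rightarrow> real \<Rightarrow> 'a" where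
  "ddot u = dot (dot u)"

definition periodic2pi :: "(real \<Rightarrow> 'b) \<Rightarrow> bool" where
  "periodic2pi u \<longleftrightarrow> (\<forall>t. u (t + 2 * pi) = u t)"

definition spaceE :: "(real \<Rightarrow> 'a::real_normed_vector) set" where
  "spaceE = {u. periodic2pi u \<and> (\<forall>t. u differentiable at t)
      \<and> (\<forall>t. dot u differentiable at t) \<and> continuous_on UNIV (ddot u)}"

definition normE :: "(real \<Rightarrow> 'a::real_normed_vector) \<Rightarrow> real" where
  "normE u = max (Sup (range (\<lambda>t. norm (u t))))
               (max (Sup (range (\<lambda>t. norm (dot u t)))) (Sup (range (\<lambda>t. norm (ddot u t)))))"

definition spaceC :: "(real \<Rightarrow> 'a::real_normed_vector) set" where
  "spaceC = {g. periodic2pi g \<and> continuous_on UNIV g}"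

text \<open>L u = u'' - u, and its inverse (L is an isomorphism \<E> \<rightarrow> \<C>).\<close>
definition opL :: "(real \<Rightarrow> 'a::real_normed_vector) \<Rightarrow> real \<Rightarrow> 'a" where
  "opL u = (\<lambda>t. ddot u t - u t)"

definition opLinv :: "(real \<Rightarrow> 'a::real_normed_vector) \<Rightarrow> real \<Rightarrow> 'a" where
  "opLinv g = the_inv_into spaceE opL g"

definition opJ :: "nat \<Rightarrow> (nat \<Rightarrow> real) \<Rightarrow> (real \<Rightarrow> 'a::real_normed_vector)
      \<Rightarrow> real \<Rightarrow> 'a \<times> (nat \<Rightarrow> 'a) \<times> 'a" where
  "opJ m tau u = (\<lambda>t. (u t, (\<lambda>j. if j \<in> {1..m} then u (t - tau j) else 0), dot u t))"

definition opN :: "(real \<Rightarrow> 'a \<Rightarrow> (nat \<Rightarrow> 'a) \<Rightarrow> 'a \<Rightarrow> 'a::real_normed_vector)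
      \<Rightarrow> (real \<Rightarrow> 'a \<times> (nat \<Rightarrow> 'a) \<times> 'a) \<Rightarrow> real \<Rightarrow> 'a" where
  "opN f w = (\<lambda>t. f t (fst (w t)) (fst (snd (w t))) (snd (snd (w t))) - fst (w t))"

definition opF :: "nat \<Rightarrow> (nat \<Rightarrow> real) \<Rightarrow> (real \<Rightarrow> 'a \<Rightarrow> (nat \<Rightarrow> 'a) \<Rightarrow> 'a \<Rightarrow> 'a::real_normed_vector)
      \<Rightarrow> real \<Rightarrow> (real \<Rightarrow> 'a) \<Rightarrow> real \<Rightarrow> 'a" where
  "opF m tau f lam x = (\<lambda>t. x t - lam *\<^sub>R opLinv (opN f (opJ m tau x)) t)"

end

theory Submission
  imports Defs
begin


lemma antideriv:
  fixes h :: "real \<Rightarrow> 'a::euclidean_space"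
  assumes hc: "continuous_on UNIV h"
  shows "\<exists>G. \<forall>t. (G has_vector_derivative h t) (at t)"
proof -
  define G where "G t = integral {0..t} h - integral {t..0} h" for t
  have int: "h integrable_on {a..b}" for a b
    by (rule integrable_continuous_real) (rule continuous_on_subset[OF hc], auto)
  have key: "G s = integral {a..s} h - integral {a..0} h" if "a \<le> s" "a \<le> 0" for a s
  proof (cases "0 \<le> s")
    case True
    have "integral {a..0} h + integral {0..s} h = integral {a..s} h"
      by (rule Henstock_Kurzweil_Integration.integral_combine) (use that True int in auto)
    moreover have "integral {s..0} h = 0"
    proof (cases "s = 0")
      case True then show ?thesis by simp
    next
      case False then show ?thesis using \<open>0 \<le> s\<close> by simp
    qed
    ultimately show ?thesis unfolding G_def by (simp add: algebra_simps)
  next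
    case False
    have "integral {a..s} h + integral {s..0} h = integral {a..0} h"
      by (rule Henstock_Kurzweil_Integration.integral_combine) (use that False int in auto)
    moreover have "integral {0..s} h = 0" using False by simp
    ultimately show ?thesis unfolding G_def by (simp add: algebra_simps)
  qed
  have "(G has_vector_derivative h t) (at t)" for t
  proof -
    define a where "a = min t 0 - 1"
    define b where "b = max t 0 + 1"
    have ab: "a < t" "t < b" unfolding a_def b_def by auto
    have "((\<lambda>u. integral {a..u} h) has_vector_derivative h t) (at t within {a..b})"
      by (rule integral_has_vector_derivative) (use ab in \<open>auto intro: continuous_on_subset[OF hc]\<close>)
    then have "((\<lambda>u. integral {a..u} h) has_vector_derivative h t) (at t)"
      using at_within_Icc_at[OF ab] by simp
    then have "((\<lambda>u. integral {a..u} h - integral {a..0} h) has_vector_derivative h t - 0) (at t)"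
      by (intro derivative_intros)
    then have d: "((\<lambda>u. integral {a..u} h - integral {a..0} h) has_vector_derivative h t) (at t)"
      by simp
    show ?thesis
      by (rule has_vector_derivative_transform_within_open[OF d, of "{a<..<b}"])
         (use ab a_def in \<open>auto intro!: key[symmetric]\<close>)
  qed
  then show ?thesis by blast
qed

lemma exp_ode:
  fixes d :: "real \<Rightarrow> 'a::euclidean_space"
  assumes "\<And>t. (d has_vector_derivative c *\<^sub>R d t) (at t)"
  shows "d t = exp (c * t) *\<^sub>R d 0"
proof -
  define z where "z s = exp (- c * s) *\<^sub>R d s" for s
  have "(z has_vector_derivative 0) (at s within UNIV)" for s
  proof -
    have e: "((\<lambda>s. exp (- c * s)) has_real_derivative exp (- c * s) * (- c)) (at s)"
      by (auto intro!: derivative_eq_intros)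
    have "(z has_vector_derivative exp (- c * s) *\<^sub>R (c *\<^sub>R d s) + (exp (- c * s) * (- c)) *\<^sub>R d s) (at s)"
      unfolding z_def by (rule has_vector_derivative_scaleR[OF e assms])
    then show ?thesis by (simp add: algebra_simps)
  qed
  then obtain k where "\<And>s. s \<in> UNIV \<Longrightarrow> z s = k"
    by (rule has_vector_derivative_zero_constant[OF convex_UNIV]) blast+
  then have "z t = z 0" by simp
  then have "exp (- c * t) *\<^sub>R d t = d 0" by (simp add: z_def)
  then have "exp (c * t) *\<^sub>R (exp (- c * t) *\<^sub>R d t) = exp (c * t) *\<^sub>R d 0" by simp
  then show ?thesis by (simp add: exp_minus_inverse mult_exp_exp[symmetric])
qed


lemma shift_deriv:
  fixes f :: "real \<Rightarrow> 'a::real_normed_vector"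
  assumes "(f has_vector_derivative f') (at (t + p))"
  shows "((\<lambda>s. f (s + p)) has_vector_derivative f') (at t)"
proof -
  have "((\<lambda>s. s + p) has_vector_derivative 1) (at t)"
    by (auto intro!: derivative_eq_intros)
  from vector_diff_chain_at[OF this] assms
  have "(f \<circ> (\<lambda>s. s + p) has_vector_derivative 1 *\<^sub>R f') (at t)" by simp
  then show ?thesis by (simp add: o_def)
qed

lemma periodic_deriv:
  fixes u :: "real \<Rightarrow> 'a::real_normed_vector"
  assumes d: "\<And>t. (u has_vector_derivative u' t) (at t)"
    and p: "\<And>t. u (t + 2 * pi) = u t"
  shows "u' (t + 2 * pi) = u' t"
proof -
  have "((\<lambda>s. u (s + 2 * pi)) has_vector_derivative u' (t + 2 * pi)) (at t)"
    by (rule shift_deriv[OF d])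
  then have "(u has_vector_derivative u' (t + 2 * pi)) (at t)" using p by simp
  then show ?thesis using d vector_derivative_unique_at by blast
qed

lemma first_order_periodic:
  fixes h :: "real \<Rightarrow> 'a::euclidean_space"
  assumes hc: "continuous_on UNIV h" and hp: "\<And>t. h (t + 2 * pi) = h t" and c: "c \<noteq> 0"
  shows "\<exists>y. (\<forall>t. y (t + 2 * pi) = y t) \<and> (\<forall>t. (y has_vector_derivative (c *\<^sub>R y t + h t)) (at t))"
proof -
  have "continuous_on UNIV (\<lambda>s. exp (- c * s) *\<^sub>R h s)"
    by (intro continuous_intros hc)
  then obtain G where G: "\<And>t. (G has_vector_derivative exp (- c * t) *\<^sub>R h t) (at t)"
    using antideriv by blast
  define e where "e = exp (2 * pi * c)"
  have e1: "e \<noteq> 1" unfolding e_def using c by simp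
  define a where "a = (1 / (e - 1)) *\<^sub>R (G 0 - e *\<^sub>R G (2 * pi))"
  define y where "y t = exp (c * t) *\<^sub>R (G t + a)" for t
  have yd: "(y has_vector_derivative (c *\<^sub>R y t + h t)) (at t)" for t
  proof -
    have e: "((\<lambda>s. exp (c * s)) has_real_derivative exp (c * t) * c) (at t)"
      by (auto intro!: derivative_eq_intros)
    have "((\<lambda>s. G s + a) has_vector_derivative exp (- c * t) *\<^sub>R h t + 0) (at t)"
      by (intro derivative_intros G)
    from has_vector_derivative_scaleR[OF e this]
    have "(y has_vector_derivative exp (c * t) *\<^sub>R (exp (- c * t) *\<^sub>R h t + 0) + (exp (c * t) * c) *\<^sub>R (G t + a)) (at t)"
      unfolding y_def .
    moreover have "exp (c * t) *\<^sub>R (exp (- c * t) *\<^sub>R h t + 0) + (exp (c * t) * c) *\<^sub>R (G t + a)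
        = c *\<^sub>R y t + h t"
      by (simp add: y_def exp_minus_inverse mult.commute)
    ultimately show ?thesis by simp
  qed
  have y0: "y (0 + 2 * pi) = y 0"
  proof -
    have "(e - 1) *\<^sub>R a = G 0 - e *\<^sub>R G (2 * pi)" using e1 by (simp add: a_def)
    then have "e *\<^sub>R (G (2 * pi) + a) = G 0 + a" by (simp add: algebra_simps)
    then show ?thesis by (simp add: y_def e_def mult.commute)
  qed
  define d where "d t = y (t + 2 * pi) - y t" for t
  have dd: "(d has_vector_derivative c *\<^sub>R d t) (at t)" for t
  proof -
    have "(d has_vector_derivative (c *\<^sub>R y (t + 2 * pi) + h (t + 2 * pi)) - (c *\<^sub>R y t + h t)) (at t)"
      unfolding d_def by (intro derivative_intros shift_deriv yd)
    then show ?thesis using hp by (simp add: d_def algebra_simps)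
  qed
  have "d t = 0" for t
    using exp_ode[OF dd, of t] y0 by (simp add: d_def)
  then show ?thesis using yd unfolding d_def by auto
qed


lemma spaceE_D:
  fixes u :: "real \<Rightarrow> 'a::euclidean_space"
  assumes "u \<in> spaceE"
  shows "(u has_vector_derivative dot u t) (at t)"
    and "(dot u has_vector_derivative ddot u t) (at t)"
    and "continuous_on UNIV (ddot u)"
    and "u (t + 2 * pi) = u t"
    and "dot u (t + 2 * pi) = dot u t"
    and "ddot u (t + 2 * pi) = ddot u t"
proof -
  have d1: "(u has_vector_derivative dot u s) (at s)" for s
    using assms unfolding spaceE_def dot_def by (simp add: vector_derivative_works[symmetric])
  have d2: "(dot u has_vector_derivative ddot u s) (at s)" for s
    using assms unfolding spaceE_def ddot_def
    by (metis (no_types, lifting) dot_def mem_Collect_eq vector_derivative_works)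
  have p: "u (s + 2 * pi) = u s" for s using assms unfolding spaceE_def periodic2pi_def by simp
  show "(u has_vector_derivative dot u t) (at t)" by (rule d1)
  show "(dot u has_vector_derivative ddot u t) (at t)" by (rule d2)
  show "continuous_on UNIV (ddot u)" using assms unfolding spaceE_def by simp
  show "u (t + 2 * pi) = u t" by (rule p)
  have p1: "dot u (s + 2 * pi) = dot u s" for s by (rule periodic_deriv[OF d1 p])
  then show "dot u (t + 2 * pi) = dot u t" .
  show "ddot u (t + 2 * pi) = ddot u t" by (rule periodic_deriv[OF d2 p1])
qed

lemma deriv_cont:
  fixes u :: "real \<Rightarrow> 'a::real_normed_vector"
  assumes "\<And>t. (u has_vector_derivative u' t) (at t)"
  shows "continuous_on UNIV u"
  using assms
  by (metis continuous_at_imp_continuous_on has_vector_derivative_continuous)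

lemma L_surj:
  fixes g :: "real \<Rightarrow> 'a::euclidean_space"
  assumes "g \<in> spaceC"
  shows "\<exists>u\<in>spaceE. opL u = g"
proof -
  have gc: "continuous_on UNIV g" and gp: "\<And>t. g (t + 2 * pi) = g t"
    using assms unfolding spaceC_def periodic2pi_def by auto
  obtain w where wp: "\<And>t. w (t + 2 * pi) = w t"
    and wd: "\<And>t. (w has_vector_derivative (1 *\<^sub>R w t + g t)) (at t)"
    using first_order_periodic[OF gc gp, of 1] by auto
  have wc: "continuous_on UNIV w" by (rule deriv_cont[OF wd])
  obtain u where up: "\<And>t. u (t + 2 * pi) = u t"
    and ud: "\<And>t. (u has_vector_derivative ((-1) *\<^sub>R u t + w t)) (at t)"
    using first_order_periodic[OF wc wp, of "-1"] by auto
  have du: "dot u = (\<lambda>t. - u t + w t)"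
    using ud unfolding dot_def by (auto intro!: ext vector_derivative_at)
  have dud: "(dot u has_vector_derivative (u t + g t)) (at t)" for t
  proof -
    have "((\<lambda>t. - u t + w t) has_vector_derivative - ((-1) *\<^sub>R u t + w t) + (1 *\<^sub>R w t + g t)) (at t)"
      by (intro derivative_intros ud wd)
    then show ?thesis unfolding du by simp
  qed
  have ddu: "ddot u = (\<lambda>t. u t + g t)"
    unfolding ddot_def using dud unfolding dot_def[of "dot u"] by (auto intro!: ext vector_derivative_at)
  have "u \<in> spaceE"
    unfolding spaceE_def periodic2pi_def
  proof (intro CollectI conjI allI)
    show "u (t + 2 * pi) = u t" for t by (rule up)
    show "u differentiable at t" for t using ud differentiableI_vector by blast
    show "dot u differentiable at t" for t using dud differentiableI_vector by blast
    show "continuous_on UNIV (ddot u)" unfolding ddu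
      by (intro continuous_intros deriv_cont[OF ud] gc)
  qed
  moreover have "opL u = g" unfolding opL_def ddu by simp
  ultimately show ?thesis by blast
qed

lemma L_inj:
  fixes u v :: "real \<Rightarrow> 'a::euclidean_space"
  assumes u: "u \<in> spaceE" and v: "v \<in> spaceE" and e: "opL u = opL v"
  shows "u = v"
proof -
  define d where "d t = u t - v t" for t
  define d1 where "d1 t = dot u t - dot v t" for t
  have dd: "(d has_vector_derivative d1 t) (at t)" for t
    unfolding d_def d1_def by (intro derivative_intros spaceE_D u v)
  have e': "ddot u t - u t = ddot v t - v t" for t using e unfolding opL_def by meson
  have dd1: "(d1 has_vector_derivative d t) (at t)" for t
  proof -
    have "(d1 has_vector_derivative ddot u t - ddot v t) (at t)"
      unfolding d1_def by (intro derivative_intros spaceE_D u v)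
    moreover have "ddot u t - ddot v t = d t" using e'[of t] unfolding d_def by (simp add: algebra_simps)
    ultimately show ?thesis by simp
  qed
  have dp: "d (t + 2 * pi) = d t" for t unfolding d_def using spaceE_D(4)[OF u] spaceE_D(4)[OF v] by simp
  have d1p: "d1 (t + 2 * pi) = d1 t" for t unfolding d1_def using spaceE_D(5)[OF u] spaceE_D(5)[OF v] by simp
  define w where "w t = d t + d1 t" for t
  have wd: "(w has_vector_derivative 1 *\<^sub>R w t) (at t)" for t
  proof -
    have "(w has_vector_derivative d1 t + d t) (at t)" unfolding w_def by (intro derivative_intros dd dd1)
    then show ?thesis by (simp add: w_def add.commute)
  qed
  have "w (0 + 2 * pi) = w 0" unfolding w_def using dp[of 0] d1p[of 0] by simp
  then have "exp (2 * pi) *\<^sub>R w 0 = w 0" using exp_ode[OF wd, of "2 * pi"] by simp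
  then have "(exp (2 * pi) - 1) *\<^sub>R w 0 = 0" by (simp add: algebra_simps)
  then have w0: "w 0 = 0" by simp
  have "w t = 0" for t using exp_ode[OF wd, of t] w0 by simp
  then have "d t + d1 t = 0" for t unfolding w_def by simp
  then have "d1 t = - d t" for t by (metis add.commute eq_neg_iff_add_eq_0)
  then have dd': "(d has_vector_derivative (-1) *\<^sub>R d t) (at t)" for t using dd[of t] by simp
  have "d (0 + 2 * pi) = d 0" using dp[of 0] by simp
  then have "exp (- (2 * pi)) *\<^sub>R d 0 = d 0" using exp_ode[OF dd', of "2 * pi"] by simp
  then have "(exp (- (2 * pi)) - 1) *\<^sub>R d 0 = 0" by (simp add: algebra_simps)
  then have d0: "d 0 = 0" by simp
  have "d t = 0" for t using exp_ode[OF dd', of t] d0 by simp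
  then show ?thesis unfolding d_def by (auto intro!: ext)
qed


lemma inner_deriv:
  fixes x z :: "real \<Rightarrow> 'a::euclidean_space"
  assumes "(x has_vector_derivative x1) (at t)" "(z has_vector_derivative z1) (at t)"
  shows "((\<lambda>s. x s \<bullet> z s) has_real_derivative (x1 \<bullet> z t + x t \<bullet> z1)) (at t)"
  using has_derivative_inner[OF assms[unfolded has_vector_derivative_def]]
  unfolding has_field_derivative_def
  by (rule has_derivative_eq_rhs) (auto simp: algebra_simps inner_commute)

lemma periodic_reduce:
  fixes u :: "real \<Rightarrow> 'b"
  assumes p: "\<And>t. u (t + 2 * pi) = u t"
  shows "\<exists>s'\<in>{0..2 * pi}. u s = u s'"
proof -
  have nat: "u (t + real n * (2 * pi)) = u t" for t n
  proof (induction n)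
    case 0 then show ?case by simp
  next
    case (Suc n)
    have "u (t + real (Suc n) * (2 * pi)) = u ((t + real n * (2 * pi)) + 2 * pi)"
      by (simp add: algebra_simps)
    also have "\<dots> = u t" using p Suc by simp
    finally show ?case .
  qed
  define k where "k = floor (s / (2 * pi))"
  define s' where "s' = s - real_of_int k * (2 * pi)"
  have "real_of_int k \<le> s / (2 * pi)" "s / (2 * pi) < real_of_int k + 1"
    unfolding k_def by linarith+
  then have "real_of_int k * (2 * pi) \<le> s" "s < (real_of_int k + 1) * (2 * pi)"
    by (simp_all add: field_simps)
  then have s'r: "s' \<in> {0..2 * pi}" unfolding s'_def by (auto simp: algebra_simps)
  have "u s = u s'"
  proof (cases "k \<ge> 0")
    case True
    then have "s = s' + real (nat k) * (2 * pi)" unfolding s'_def by simp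
    then show ?thesis using nat by metis
  next
    case False
    then have "s' = s + real (nat (- k)) * (2 * pi)" unfolding s'_def by simp
    then show ?thesis using nat by metis
  qed
  then show ?thesis using s'r by blast
qed

lemma second_deriv_max:
  fixes r :: "real \<Rightarrow> real"
  assumes d1: "\<And>t. (r has_real_derivative r1 t) (at t)"
    and d2: "(r1 has_real_derivative r2) (at t0)"
    and mx: "\<And>s. r s \<le> r t0"
  shows "r2 \<le> 0"
proof (rule ccontr)
  assume "\<not> r2 \<le> 0"
  then have pos: "r2 > 0" by simp
  have z: "r1 t0 = 0" by (rule DERIV_local_max[OF d1, of 1]) (use mx in auto)
  obtain d where d: "d > 0" "\<And>h. h > 0 \<Longrightarrow> h < d \<Longrightarrow> r1 t0 < r1 (t0 + h)"
    using DERIV_pos_inc_right[OF d2 pos] by blast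
  obtain w where w: "w > t0" "w < t0 + d / 2" "r (t0 + d / 2) - r t0 = (t0 + d / 2 - t0) * r1 w"
    using MVT2[of t0 "t0 + d / 2" r r1] d1 d by auto
  have "r1 t0 < r1 (t0 + (w - t0))" by (rule d(2)) (use w in auto)
  then have "r1 w > 0" using z by simp
  then have "(t0 + d / 2 - t0) * r1 w > 0" using d by simp
  then have "r (t0 + d / 2) - r t0 > 0" using w(3) by linarith
  then show False using mx[of "t0 + d / 2"] by simp
qed

theorem lemma4p2:
  fixes m :: nat and tau :: "nat \<Rightarrow> real" and R :: real
    and f :: "real \<Rightarrow> 'a::euclidean_space \<Rightarrow> (nat \<Rightarrow> 'a) \<Rightarrow> 'a \<Rightarrow> 'a"
  assumes m: "m \<ge> 1"
    and tau0: "tau 0 = 0"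
    and tau_mono: "\<forall>j<m. tau j < tau (Suc j)"
    and tau_lt: "tau m < 2 * pi"
    and tau_sym: "\<forall>j\<in>{1..m}. tau (m - j + 1) = 2 * pi - tau j"
    and A0_cont: "continuous_on (UNIV \<times> UNIV \<times> tuples m \<times> UNIV)
                    (\<lambda>(t, x, y, z). f t x y z)"
    and A0_per: "\<forall>t x y z. y \<in> tuples m \<longrightarrow> f (t + 2 * pi) x y z = f t x y z"
    and R_pos: "R > 0"
    and A1: "\<forall>t x y z. y \<in> tuples m \<longrightarrow> norm x \<ge> R \<longrightarrow> tnorm m y \<le> norm x
                \<longrightarrow> x \<bullet> z = 0 \<longrightarrow> x \<bullet> f t x y z > 0"
    and A2: "\<exists>\<phi> :: real \<Rightarrow> real. continuous_on {0..} \<phi> \<and> (\<forall>s\<ge>0. \<phi> s > 0)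
                \<and> filterlim (\<lambda>T. integral {0..T} (\<lambda>s. s / \<phi> s)) at_top at_top
                \<and> (\<forall>t x y z. y \<in> tuples m \<longrightarrow> norm x \<le> R \<longrightarrow> tnorm m y \<le> R
                      \<longrightarrow> norm (f t x y z) \<le> \<phi> (norm z))"
    and A3: "\<exists>\<alpha> K :: real. \<alpha> > 0 \<and> K > 0
                \<and> (\<forall>t x y z. y \<in> tuples m \<longrightarrow> norm x \<le> R \<longrightarrow> tnorm m y \<le> R
                      \<longrightarrow> norm (f t x y z) \<le> \<alpha> * (x \<bullet> f t x y z + (norm z)\<^sup>2) + K)"
  shows "\<exists>C > 0. \<forall>lam \<in> {0..1}. \<forall>x \<in> spaceE.
            opF m tau f lam x = (\<lambda>t. 0) \<longrightarrow> normE x < C"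
proof -
  obtain \<phi> :: "real \<Rightarrow> real" where \<phi>c: "continuous_on {0..} \<phi>"
    and \<phi>b: "\<forall>t x y z. y \<in> tuples m \<longrightarrow> norm x \<le> R \<longrightarrow> tnorm m y \<le> R
                      \<longrightarrow> norm (f t x y z) \<le> \<phi> (norm z)"
    using A2 by blast
  obtain \<alpha> K :: real where \<alpha>p: "\<alpha> > 0" and Kp: "K > 0"
    and A3': "\<forall>t x y z. y \<in> tuples m \<longrightarrow> norm x \<le> R \<longrightarrow> tnorm m y \<le> R
                      \<longrightarrow> norm (f t x y z) \<le> \<alpha> * (x \<bullet> f t x y z + (norm z)\<^sup>2) + K"
    using A3 by blast
  define M where "M = 2 * pi * (K + R)"
  have Mpos: "M > 0" using Kp R_pos by (simp add: M_def)
  obtain B where B: "\<And>s. s \<in> {0..M} \<Longrightarrow> \<phi> s \<le> B"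
  proof -
    have "\<exists>s0\<in>{0..M}. \<forall>s\<in>{0..M}. \<phi> s \<le> \<phi> s0"
      by (rule continuous_attains_sup) (use Mpos in \<open>auto intro: continuous_on_subset[OF \<phi>c]\<close>)
    then show ?thesis using that by blast
  qed
  define C where "C = max R (max M (B + R)) + 1"
  have Cpos: "C > 0" using R_pos unfolding C_def by linarith
  have main: "normE x < C" if lam: "lam \<in> {0..1}" and xE: "x \<in> spaceE"
    and F0: "opF m tau f lam x = (\<lambda>t. 0)" for lam x
  proof (cases "lam = 0")
    case True
    have x0: "x = (\<lambda>t. 0)"
    proof
      fix t show "x t = 0" using fun_cong[OF F0, of t] True unfolding opF_def by simp
    qed
    have d0: "dot x = (\<lambda>t. 0)" unfolding x0 dot_def
      by (auto intro!: ext vector_derivative_at derivative_intros)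
    have dd0: "ddot x = (\<lambda>t. 0)" unfolding ddot_def d0 dot_def
      by (auto intro!: ext vector_derivative_at derivative_intros)
    have "normE x = 0" unfolding normE_def d0 dd0 by (simp add: x0)
    then show ?thesis using Cpos by simp
  next
    case False
    then have l0: "0 < lam" and l1: "lam \<le> 1" using lam by auto
    note xd1 = spaceE_D(1)[OF xE] and xd2 = spaceE_D(2)[OF xE] and x2c = spaceE_D(3)[OF xE]
      and xp = spaceE_D(4)[OF xE] and x1p = spaceE_D(5)[OF xE] and x2p = spaceE_D(6)[OF xE]
    have xc: "continuous_on UNIV x" by (rule deriv_cont[OF xd1])
    have x1c: "continuous_on UNIV (dot x)" by (rule deriv_cont[OF xd2])
    define ys where "ys t = (\<lambda>j. if j \<in> {1..m} then x (t - tau j) else 0)" for t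
    have ysT: "ys t \<in> tuples m" for t unfolding ys_def tuples_def by auto
    define F where "F t = f t (x t) (ys t) (dot x t)" for t
    have gdef: "opN f (opJ m tau x) = (\<lambda>t. F t - x t)"
      unfolding opN_def opJ_def F_def ys_def by simp
    have ysc: "continuous_on UNIV ys"
    proof (rule continuous_on_coordinatewise_then_product)
      fix i
      show "continuous_on UNIV (\<lambda>t. ys t i)"
      proof (cases "i \<in> {1..m}")
        case True
        then show ?thesis unfolding ys_def
          by (auto intro!: continuous_on_compose2[OF xc] continuous_intros)
      next
        case False
        then have "(\<lambda>t. ys t i) = (\<lambda>t. 0)" unfolding ys_def by auto
        then show ?thesis by (metis continuous_on_const)
      qed
    qed
    have Fc: "continuous_on UNIV F"
    proof -
      have "continuous_on UNIV (\<lambda>t. (\<lambda>(t, x, y, z). f t x y z) (t, x t, ys t, dot x t))"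
        by (rule continuous_on_compose2[OF A0_cont])
           (auto intro!: continuous_intros xc ysc x1c simp: ysT)
      then show ?thesis unfolding F_def by simp
    qed
    have ysp: "ys (t + 2 * pi) = ys t" for t
    proof
      fix j
      have "x (t + 2 * pi - tau j) = x (t - tau j)"
        using xp[of "t - tau j"] by (simp add: algebra_simps)
      then show "ys (t + 2 * pi) j = ys t j" unfolding ys_def by simp
    qed
    have Fp: "F (t + 2 * pi) = F t" for t
      unfolding F_def using A0_per ysT xp x1p ysp by simp
    have gC: "(\<lambda>t. F t - x t) \<in> spaceC"
      unfolding spaceC_def periodic2pi_def using Fp xp
      by (auto intro!: continuous_intros Fc xc)
    obtain v where vE: "v \<in> spaceE" and vL: "opL v = (\<lambda>t. F t - x t)"
      using L_surj[OF gC] by blast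
    have inj: "inj_on opL (spaceE :: (real \<Rightarrow> 'a) set)"
      by (rule inj_onI) (rule L_inj)
    have "opLinv (opN f (opJ m tau x)) = v"
      unfolding opLinv_def gdef using the_inv_into_f_f[OF inj vE] vL by simp
    then have xv: "x t = lam *\<^sub>R v t" for t
      using fun_cong[OF F0, of t] unfolding opF_def by simp
    have xfun: "x = (\<lambda>t. lam *\<^sub>R v t)" by (rule ext) (rule xv)
    have X1: "dot x t = lam *\<^sub>R dot v t" for t
    proof -
      have "((\<lambda>t. lam *\<^sub>R v t) has_vector_derivative lam *\<^sub>R dot v t) (at t)"
        by (rule bounded_linear.has_vector_derivative[OF bounded_linear_scaleR_right spaceE_D(1)[OF vE]])
      then have "(x has_vector_derivative lam *\<^sub>R dot v t) (at t)" using xfun by simp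
      then show ?thesis unfolding dot_def by (rule vector_derivative_at)
    qed
    have x1fun: "dot x = (\<lambda>t. lam *\<^sub>R dot v t)" by (rule ext) (rule X1)
    have X2: "ddot x t = lam *\<^sub>R ddot v t" for t
    proof -
      have "((\<lambda>t. lam *\<^sub>R dot v t) has_vector_derivative lam *\<^sub>R ddot v t) (at t)"
        by (rule bounded_linear.has_vector_derivative[OF bounded_linear_scaleR_right spaceE_D(2)[OF vE]])
      then have "(dot x has_vector_derivative lam *\<^sub>R ddot v t) (at t)" using x1fun by simp
      then show ?thesis unfolding ddot_def dot_def[of "dot x"] by (rule vector_derivative_at)
    qed
    have E: "ddot x t = lam *\<^sub>R F t + (1 - lam) *\<^sub>R x t" for t
    proof -
      have "ddot v t - v t = F t - x t" using fun_cong[OF vL, of t] unfolding opL_def by simp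
      then have "ddot v t = F t - x t + v t" by (simp add: algebra_simps)
      then have "ddot x t = lam *\<^sub>R (F t - x t) + lam *\<^sub>R v t" by (simp add: X2 scaleR_add_right)
      also have "\<dots> = lam *\<^sub>R F t + (1 - lam) *\<^sub>R x t"
        using xv[of t] by (simp add: algebra_simps)
      finally show ?thesis .
    qed
    define r where "r t = x t \<bullet> x t" for t
    have rd1: "(r has_real_derivative 2 * (x t \<bullet> dot x t)) (at t)" for t
    proof -
      have "(r has_real_derivative dot x t \<bullet> x t + x t \<bullet> dot x t) (at t)"
        unfolding r_def by (rule inner_deriv[OF xd1 xd1])
      then show ?thesis by (simp add: inner_commute)
    qed
    have rd2: "((\<lambda>t. 2 * (x t \<bullet> dot x t)) has_real_derivative
                 2 * (dot x t \<bullet> dot x t + x t \<bullet> ddot x t)) (at t)" for t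
      by (rule DERIV_cmult) (rule inner_deriv[OF xd1 xd2])
    have rc: "continuous_on {0..2 * pi} r"
      unfolding r_def by (intro continuous_intros continuous_on_subset[OF xc]) auto
    obtain t0 where t0: "t0 \<in> {0..2 * pi}" "\<forall>s\<in>{0..2 * pi}. r s \<le> r t0"
      using continuous_attains_sup[OF compact_Icc _ rc] by auto
    have rp: "r (t + 2 * pi) = r t" for t unfolding r_def using xp by simp
    have mx: "r s \<le> r t0" for s
    proof -
      obtain s' where "s' \<in> {0..2 * pi}" "r s = r s'" using periodic_reduce[of r, OF rp] by blast
      then show ?thesis using t0 by simp
    qed
    have nle: "norm (x s) \<le> norm (x t0)" for s using mx[of s] by (simp add: r_def norm_le)
    have m1: "{1..m} \<noteq> {}" using m by simp
    have "norm (x t0) < R"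
    proof (rule ccontr)
      assume "\<not> norm (x t0) < R"
      then have big: "norm (x t0) \<ge> R" by simp
      have "2 * (x t0 \<bullet> dot x t0) = 0" by (rule DERIV_local_max[OF rd1, of 1]) (use mx in auto)
      then have orth: "x t0 \<bullet> dot x t0 = 0" by simp
      have tn: "tnorm m (ys t0) \<le> norm (x t0)"
        unfolding tnorm_def using m1 by (subst Max_le_iff) (auto simp: ys_def nle)
      have "x t0 \<bullet> F t0 > 0" using A1 ysT big tn orth unfolding F_def by blast
      moreover have "x t0 \<bullet> ddot x t0 = lam * (x t0 \<bullet> F t0) + (1 - lam) * (x t0 \<bullet> x t0)"
        by (simp add: E inner_add_right)
      moreover have "(1 - lam) * (x t0 \<bullet> x t0) \<ge> 0" using l1 by simp
      ultimately have "x t0 \<bullet> ddot x t0 > 0" using l0 by (smt (verit) mult_pos_pos)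
      moreover have "dot x t0 \<bullet> dot x t0 \<ge> 0" by simp
      ultimately have "2 * (dot x t0 \<bullet> dot x t0 + x t0 \<bullet> ddot x t0) > 0"
        by (intro mult_pos_pos add_nonneg_pos) auto
      moreover have "2 * (dot x t0 \<bullet> dot x t0 + x t0 \<bullet> ddot x t0) \<le> 0"
        by (rule second_deriv_max[OF rd1 rd2 mx])
      ultimately show False by simp
    qed
    then have xR: "norm (x s) < R" for s using nle[of s] by simp
    have tnR: "tnorm m (ys s) \<le> R" for s
      unfolding tnorm_def using m1 xR by (subst Max_le_iff) (auto simp: ys_def less_imp_le)
    have n2: "norm (ddot x s) \<le> lam * norm (F s) + R" for s
    proof -
      have h1: "(1 - lam) * norm (x s) \<le> norm (x s)"
        by (rule mult_left_le_one_le) (use l0 l1 in auto)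
      have "norm (ddot x s) \<le> norm (lam *\<^sub>R F s) + norm ((1 - lam) *\<^sub>R x s)"
        unfolding E by (rule norm_triangle_ineq)
      also have "\<dots> = lam * norm (F s) + (1 - lam) * norm (x s)" using l0 l1 by simp
      also have "\<dots> \<le> lam * norm (F s) + R"
        using h1 xR[of s] by simp
      finally show ?thesis by simp
    qed
    have PB: "norm (ddot x s) \<le> \<alpha> * (x s \<bullet> ddot x s + dot x s \<bullet> dot x s) + (K + R)" for s
    proof -
      have a3: "norm (F s) \<le> \<alpha> * (x s \<bullet> F s + (norm (dot x s))\<^sup>2) + K"
        using A3' ysT tnR xR[of s] unfolding F_def by (meson less_imp_le)
      have xi: "x s \<bullet> ddot x s = lam * (x s \<bullet> F s) + (1 - lam) * (x s \<bullet> x s)"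
        by (simp add: E inner_add_right)
      have "(1 - lam) * (x s \<bullet> x s) \<ge> 0" using l1 by simp
      then have lxf: "lam * (x s \<bullet> F s) \<le> x s \<bullet> ddot x s" using xi by simp
      have nn: "(norm (dot x s))\<^sup>2 = dot x s \<bullet> dot x s" by (simp add: power2_norm_eq_inner)
      have "lam * norm (F s) \<le> lam * (\<alpha> * (x s \<bullet> F s + (norm (dot x s))\<^sup>2) + K)"
        by (rule mult_left_mono[OF a3]) (use l0 in simp)
      also have "\<dots> = \<alpha> * (lam * (x s \<bullet> F s)) + \<alpha> * (lam * (dot x s \<bullet> dot x s)) + lam * K"
        by (simp add: nn algebra_simps)
      also have "\<alpha> * (lam * (x s \<bullet> F s)) \<le> \<alpha> * (x s \<bullet> ddot x s)"
        by (rule mult_left_mono[OF lxf]) (use \<alpha>p in simp)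
      also have "lam * (dot x s \<bullet> dot x s) \<le> dot x s \<bullet> dot x s"
        by (rule mult_left_le_one_le) (use l0 l1 in auto)
      then have "\<alpha> * (lam * (dot x s \<bullet> dot x s)) \<le> \<alpha> * (dot x s \<bullet> dot x s)"
        by (rule mult_left_mono) (use \<alpha>p in simp)
      also have "lam * K \<le> K" by (rule mult_left_le_one_le) (use l0 l1 Kp in auto)
      finally have "lam * norm (F s) \<le> \<alpha> * (x s \<bullet> ddot x s) + \<alpha> * (dot x s \<bullet> dot x s) + K"
        by simp
      then show ?thesis using n2[of s] by (simp add: algebra_simps)
    qed
    have x2ci: "(\<lambda>s. norm (ddot x s)) integrable_on {a..b}" for a b
      by (rule integrable_continuous_real) (intro continuous_intros continuous_on_subset[OF x2c], auto)
    have x2i: "ddot x integrable_on {a..b}" for a b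
      by (rule integrable_continuous_real) (rule continuous_on_subset[OF x2c], auto)
    have Ib: "integral {t..t + 2 * pi} (\<lambda>s. norm (ddot x s)) \<le> M" for t
    proof -
      define q where "q s = x s \<bullet> dot x s" for s
      have qd: "(q has_vector_derivative (dot x s \<bullet> dot x s + x s \<bullet> ddot x s)) (at s within {t..t + 2 * pi})" for s
        unfolding q_def has_real_derivative_iff_has_vector_derivative[symmetric]
        by (rule has_field_derivative_at_within) (rule inner_deriv[OF xd1 xd2])
      have qi: "((\<lambda>s. dot x s \<bullet> dot x s + x s \<bullet> ddot x s) has_integral q (t + 2 * pi) - q t) {t..t + 2 * pi}"
        by (rule fundamental_theorem_of_calculus) (use qd in auto)
      have "q (t + 2 * pi) = q t" unfolding q_def using xp x1p by simp
      then have qi0: "((\<lambda>s. x s \<bullet> ddot x s + dot x s \<bullet> dot x s) has_integral 0) {t..t + 2 * pi}"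
        using qi by (simp add: add.commute)
      have rhs: "((\<lambda>s. \<alpha> * (x s \<bullet> ddot x s + dot x s \<bullet> dot x s) + (K + R)) has_integral
                 (\<alpha> * 0 + Henstock_Kurzweil_Integration.content {t..t + 2 * pi} *\<^sub>R (K + R))) {t..t + 2 * pi}"
        by (intro has_integral_add has_integral_mult_right qi0 has_integral_const_real)
      have "integral {t..t + 2 * pi} (\<lambda>s. norm (ddot x s)) \<le> \<alpha> * 0 + Henstock_Kurzweil_Integration.content {t..t + 2 * pi} *\<^sub>R (K + R)"
        by (rule has_integral_le[OF integrable_integral[OF x2ci] rhs]) (rule PB)
      then show ?thesis by (simp add: M_def content_real)
    qed
    have X1b: "norm (dot x t) \<le> M" for t
    proof -
      define \<psi> where "\<psi> s = dot x t \<bullet> x s" for s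
      have \<psi>d: "(\<psi> has_real_derivative (dot x t \<bullet> dot x s)) (at s)" for s
      proof -
        have "((\<lambda>s. dot x t) has_vector_derivative 0) (at s)" by (rule has_vector_derivative_const)
        from inner_deriv[OF this xd1] show ?thesis unfolding \<psi>_def by simp
      qed
      have \<psi>c: "continuous_on {t..t + 2 * pi} \<psi>"
        unfolding \<psi>_def by (intro continuous_intros continuous_on_subset[OF xc]) auto
      have \<psi>p: "\<psi> t = \<psi> (t + 2 * pi)" unfolding \<psi>_def using xp by simp
      obtain z where z: "t < z" "z < t + 2 * pi" "(\<psi> has_real_derivative 0) (at z)"
        using Rolle[OF _ \<psi>p \<psi>c] \<psi>d by (metis differentiableI has_field_derivative_def pi_gt_zero less_add_same_cancel1 mult_pos_pos zero_less_numeral)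
      have orth: "dot x t \<bullet> dot x z = 0" using DERIV_unique[OF \<psi>d z(3)] .
      have "(ddot x has_integral dot x z - dot x t) {t..z}"
        by (rule fundamental_theorem_of_calculus) (use z in \<open>auto intro: has_vector_derivative_at_within xd2\<close>)
      then have "norm (dot x z - dot x t) = norm (integral {t..z} (ddot x))" by (simp add: integral_unique)
      also have "\<dots> \<le> integral {t..z} (\<lambda>s. norm (ddot x s))"
        by (rule integral_norm_bound_integral[OF x2i x2ci]) simp
      also have "\<dots> \<le> integral {t..t + 2 * pi} (\<lambda>s. norm (ddot x s))"
        by (rule integral_subset_le[OF _ x2ci x2ci]) (use z in auto)
      also have "\<dots> \<le> M" by (rule Ib)
      finally have dz: "norm (dot x z - dot x t) \<le> M" .
      have "norm (dot x t) * norm (dot x t) = dot x t \<bullet> dot x t"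
        by (simp add: power2_norm_eq_inner[symmetric] power2_eq_square)
      also have "\<dots> = dot x t \<bullet> (dot x t - dot x z)" using orth by (simp add: inner_diff_right)
      also have "\<dots> \<le> norm (dot x t) * norm (dot x t - dot x z)" by (rule norm_cauchy_schwarz)
      also have "\<dots> \<le> norm (dot x t) * M"
        by (rule mult_left_mono) (use dz in \<open>auto simp: norm_minus_commute\<close>)
      finally have nm: "norm (dot x t) * norm (dot x t) \<le> norm (dot x t) * M" .
      show ?thesis
      proof (rule ccontr)
        assume "\<not> norm (dot x t) \<le> M"
        then have "norm (dot x t) > M" by simp
        then have "norm (dot x t) * M < norm (dot x t) * norm (dot x t)"
          using Mpos by (intro mult_strict_left_mono) auto
        then show False using nm by simp
      qed
    qed
    have X2b: "norm (ddot x t) \<le> B + R" for t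
    proof -
      have "norm (F t) \<le> \<phi> (norm (dot x t))"
        using \<phi>b ysT tnR xR[of t] unfolding F_def by (meson less_imp_le)
      also have "\<dots> \<le> B" by (rule B) (use X1b[of t] in simp)
      finally have fB: "norm (F t) \<le> B" .
      have "lam * norm (F t) \<le> norm (F t)" by (rule mult_left_le_one_le) (use l0 l1 in auto)
      then show ?thesis using n2[of t] fB by simp
    qed
    have s1: "Sup (range (\<lambda>t. norm (x t))) \<le> R"
      by (rule cSup_least) (auto simp: xR less_imp_le)
    have s2: "Sup (range (\<lambda>t. norm (dot x t))) \<le> M"
      by (rule cSup_least) (auto simp: X1b)
    have s3: "Sup (range (\<lambda>t. norm (ddot x t))) \<le> B + R"
      by (rule cSup_least) (auto simp: X2b)
    have "normE x \<le> max R (max M (B + R))"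
      unfolding normE_def by (intro max.mono s1 s2 s3)
    then show ?thesis unfolding C_def by simp
  qed
  show ?thesis using main Cpos by blast
qed

end
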